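(* Let $V$ be a quasi-regular mixed lattice vector space and $W$ a subset of $V$. Then $W$ is a regular quasi-ideal if and only if $W=A_{sp}-A_{sp}$ for some ideal $A$ of $V$.
   Context: A mixed lattice vector space is a real vector space $V$ with two partial orderings $\le$ (initial) and $\preceq$ (specific), each compatible with the vector space structure, such that for all $x,y$ the mixed lower envelope $x\curlywedge y=\max\{w: w\preceq x,\ w\le y\}$ and mixed upper envelope $x\curlyvee y=\min\{w: x\preceq w,\ y\le w\}$ exist (max/min with respect to $\le$). $V_p=\{x:0\le x\}$, $V_{sp}=\{x:0\preceq x\}$, $E_p=E\cap V_p$, $E_{sp}=E\cap V_{sp}$. $V$ is quasi-regular if $V_{sp}$ is closed under $\curlywedge,\curlyvee$. A mixed lattice subspace is a linear subspace closed under $\curlywedge,\curlyvee$. A subspace $S$ is regular if $S=S_{sp}-S_{sp}$. An ideal is a mixed lattice subspace that is $(\le)$-order convex ($x\le z\le y$ with $x,y$ in it implies $z$ in it). A quasi-ideal is a mixed lattice subspace $A$ such that $y\in A$ and $0\preceq x\le y$ imply $x\in A$. *)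

theory Defs
  imports Main "HOL-Analysis.Analysis"
begin

definition ordered_vs_rel :: "('a::real_vector \<Rightarrow> 'a \<Rightarrow> bool) \<Rightarrow> bool" where
  "ordered_vs_rel r \<longleftrightarrow>
     (\<forall>x. r x x) \<and>
     (\<forall>x y. r x y \<and> r y x \<longrightarrow> x = y) \<and>
     (\<forall>x y z. r x y \<and> r y z \<longrightarrow> r x z) \<and>
     (\<forall>x y z. r x y \<longrightarrow> r (x + z) (y + z)) \<and>
     (\<forall>x y (c::real). r x y \<and> 0 \<le> c \<longrightarrow> r (c *\<^sub>R x) (c *\<^sub>R y))"

definition mlow_set :: "('a \<Rightarrow> 'a \<Rightarrow> bool) \<Rightarrow> ('a \<Rightarrow> 'a \<Rightarrow> bool) \<Rightarrow> 'a \<Rightarrow> 'a \<Rightarrow> 'a set" where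
  "mlow_set le sle x y = {w. sle w x \<and> le w y}"

definition mupp_set :: "('a \<Rightarrow> 'a \<Rightarrow> bool) \<Rightarrow> ('a \<Rightarrow> 'a \<Rightarrow> bool) \<Rightarrow> 'a \<Rightarrow> 'a \<Rightarrow> 'a set" where
  "mupp_set le sle x y = {w. sle x w \<and> le y w}"

definition is_max_wrt :: "('a \<Rightarrow> 'a \<Rightarrow> bool) \<Rightarrow> 'a set \<Rightarrow> 'a \<Rightarrow> bool" where
  "is_max_wrt le S w \<longleftrightarrow> w \<in> S \<and> (\<forall>v\<in>S. le v w)"

definition is_min_wrt :: "('a \<Rightarrow> 'a \<Rightarrow> bool) \<Rightarrow> 'a set \<Rightarrow> 'a \<Rightarrow> bool" where
  "is_min_wrt le S w \<longleftrightarrow> w \<in> S \<and> (\<forall>v\<in>S. le w v)"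

definition mlow :: "('a \<Rightarrow> 'a \<Rightarrow> bool) \<Rightarrow> ('a \<Rightarrow> 'a \<Rightarrow> bool) \<Rightarrow> 'a \<Rightarrow> 'a \<Rightarrow> 'a" where
  "mlow le sle x y = (THE w. is_max_wrt le (mlow_set le sle x y) w)"

definition mupp :: "('a \<Rightarrow> 'a \<Rightarrow> bool) \<Rightarrow> ('a \<Rightarrow> 'a \<Rightarrow> bool) \<Rightarrow> 'a \<Rightarrow> 'a \<Rightarrow> 'a" where
  "mupp le sle x y = (THE w. is_min_wrt le (mupp_set le sle x y) w)"

text \<open>Mixed lattice vector space: le is the initial order, sle the specific order.\<close>
definition mixed_lattice_vs :: "('a::real_vector \<Rightarrow> 'a \<Rightarrow> bool) \<Rightarrow> ('a \<Rightarrow> 'a \<Rightarrow> bool) \<Rightarrow> bool" where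
  "mixed_lattice_vs le sle \<longleftrightarrow>
     ordered_vs_rel le \<and> ordered_vs_rel sle \<and>
     (\<forall>x y. \<exists>w. is_max_wrt le (mlow_set le sle x y) w) \<and>
     (\<forall>x y. \<exists>w. is_min_wrt le (mupp_set le sle x y) w)"

definition pos_part :: "('a::real_vector \<Rightarrow> 'a \<Rightarrow> bool) \<Rightarrow> 'a set \<Rightarrow> 'a set" where
  "pos_part r E = {x \<in> E. r 0 x}"

definition quasi_regular :: "('a::real_vector \<Rightarrow> 'a \<Rightarrow> bool) \<Rightarrow> ('a \<Rightarrow> 'a \<Rightarrow> bool) \<Rightarrow> bool" where
  "quasi_regular le sle \<longleftrightarrow>
     (\<forall>x y. sle 0 x \<and> sle 0 y \<longrightarrow> sle 0 (mlow le sle x y) \<and> sle 0 (mupp le sle x y))"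

definition mixed_lattice_subspace :: "('a::real_vector \<Rightarrow> 'a \<Rightarrow> bool) \<Rightarrow> ('a \<Rightarrow> 'a \<Rightarrow> bool) \<Rightarrow> 'a set \<Rightarrow> bool" where
  "mixed_lattice_subspace le sle S \<longleftrightarrow>
     subspace S \<and> (\<forall>x\<in>S. \<forall>y\<in>S. mlow le sle x y \<in> S \<and> mupp le sle x y \<in> S)"

definition diff_set :: "'a::real_vector set \<Rightarrow> 'a set" where
  "diff_set P = {a - b | a b. a \<in> P \<and> b \<in> P}"

definition regular_subspace :: "('a::real_vector \<Rightarrow> 'a \<Rightarrow> bool) \<Rightarrow> 'a set \<Rightarrow> bool" where
  "regular_subspace sle S \<longleftrightarrow> subspace S \<and> S = diff_set (pos_part sle S)"

definition mixed_ideal :: "('a::real_vector \<Rightarrow> 'a \<Rightarrow> bool) \<Rightarrow> ('a \<Rightarrow> 'a \<Rightarrow> bool) \<Rightarrow> 'a set \<Rightarrow> bool" where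
  "mixed_ideal le sle A \<longleftrightarrow> mixed_lattice_subspace le sle A \<and>
     (\<forall>x y z. x \<in> A \<and> y \<in> A \<and> le x z \<and> le z y \<longrightarrow> z \<in> A)"

definition quasi_ideal :: "('a::real_vector \<Rightarrow> 'a \<Rightarrow> bool) \<Rightarrow> ('a \<Rightarrow> 'a \<Rightarrow> bool) \<Rightarrow> 'a set \<Rightarrow> bool" where
  "quasi_ideal le sle A \<longleftrightarrow> mixed_lattice_subspace le sle A \<and>
     (\<forall>x y. y \<in> A \<and> sle 0 x \<and> le x y \<longrightarrow> x \<in> A)"

end

theory Submission
  imports Defs
begin

lemma ovs_iff:
  assumes "ordered_vs_rel r"
  shows "r x y \<longleftrightarrow> r 0 (y - x)"
proof
  assume "r x y"
  then have "r (x + - x) (y + - x)" using assms unfolding ordered_vs_rel_def by blast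
  then show "r 0 (y - x)" by simp
next
  assume "r 0 (y - x)"
  then have "r (0 + x) (y - x + x)" using assms unfolding ordered_vs_rel_def by blast
  then show "r x y" by simp
qed

lemma ovs_refl: "ordered_vs_rel r \<Longrightarrow> r x x"
  unfolding ordered_vs_rel_def by blast

lemma ovs_trans: "ordered_vs_rel r \<Longrightarrow> r x y \<Longrightarrow> r y z \<Longrightarrow> r x z"
  unfolding ordered_vs_rel_def by blast

lemma ovs_antisym: "ordered_vs_rel r \<Longrightarrow> r x y \<Longrightarrow> r y x \<Longrightarrow> x = y"
  unfolding ordered_vs_rel_def by blast

lemma ovs_add: "ordered_vs_rel r \<Longrightarrow> r x y \<Longrightarrow> r (x + z) (y + z)"
  unfolding ordered_vs_rel_def by blast

lemma cone_add:
  assumes "ordered_vs_rel r" "r 0 a" "r 0 b" shows "r 0 (a + b)"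
proof -
  have "r (0 + a) (b + a)" using ovs_add[OF assms(1) assms(3)] .
  then show ?thesis using ovs_trans[OF assms(1) assms(2)] by (simp add: add.commute)
qed

lemma cone_scale:
  assumes "ordered_vs_rel r" "r 0 a" "0 \<le> c" shows "r 0 (c *\<^sub>R a)"
  using assms unfolding ordered_vs_rel_def by (metis scale_zero_right)

lemma mlow_props:
  assumes "mixed_lattice_vs le sle"
  shows "sle (mlow le sle x y) x \<and> le (mlow le sle x y) y \<and>
         (\<forall>w. sle w x \<and> le w y \<longrightarrow> le w (mlow le sle x y))"
proof -
  have oL: "ordered_vs_rel le" using assms unfolding mixed_lattice_vs_def by blast
  obtain w where w: "is_max_wrt le (mlow_set le sle x y) w"
    using assms unfolding mixed_lattice_vs_def by blast
  have "mlow le sle x y = w"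
    unfolding mlow_def
  proof (rule the_equality)
    show "is_max_wrt le (mlow_set le sle x y) w" by (rule w)
    fix v assume "is_max_wrt le (mlow_set le sle x y) v"
    then show "v = w" using w ovs_antisym[OF oL] unfolding is_max_wrt_def by blast
  qed
  then show ?thesis using w unfolding is_max_wrt_def mlow_set_def by auto
qed

lemma mupp_props:
  assumes "mixed_lattice_vs le sle"
  shows "sle x (mupp le sle x y) \<and> le y (mupp le sle x y) \<and>
         (\<forall>w. sle x w \<and> le y w \<longrightarrow> le (mupp le sle x y) w)"
proof -
  have oL: "ordered_vs_rel le" using assms unfolding mixed_lattice_vs_def by blast
  obtain w where w: "is_min_wrt le (mupp_set le sle x y) w"
    using assms unfolding mixed_lattice_vs_def by blast
  have "mupp le sle x y = w"
    unfolding mupp_def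
  proof (rule the_equality)
    show "is_min_wrt le (mupp_set le sle x y) w" by (rule w)
    fix v assume "is_min_wrt le (mupp_set le sle x y) v"
    then show "v = w" using w ovs_antisym[OF oL] unfolding is_min_wrt_def by blast
  qed
  then show ?thesis using w unfolding is_min_wrt_def mupp_set_def by auto
qed

lemma mlow_transl:
  assumes M: "mixed_lattice_vs le sle"
  shows "mlow le sle (x + z) (y + z) = mlow le sle x y + z"
proof -
  have oL: "ordered_vs_rel le" and oS: "ordered_vs_rel sle"
    using M unfolding mixed_lattice_vs_def by blast+
  define m where "m = mlow le sle x y"
  define m' where "m' = mlow le sle (x + z) (y + z)"
  have P: "sle m x" "le m y" "\<And>w. sle w x \<Longrightarrow> le w y \<Longrightarrow> le w m"
    using mlow_props[OF M, of x y] unfolding m_def by blast+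
  have P': "sle m' (x+z)" "le m' (y+z)" "\<And>w. sle w (x+z) \<Longrightarrow> le w (y+z) \<Longrightarrow> le w m'"
    using mlow_props[OF M, of "x+z" "y+z"] unfolding m'_def by blast+
  have 1: "le (m + z) m'"
    using P'(3) ovs_add[OF oS P(1)] ovs_add[OF oL P(2)] by blast
  have "sle (m' + - z) x" using ovs_add[OF oS P'(1), of "-z"] by simp
  moreover have "le (m' + - z) y" using ovs_add[OF oL P'(2), of "-z"] by simp
  ultimately have "le (m' + - z) m" using P(3) by blast
  then have "le (m' + - z + z) (m + z)" using ovs_add[OF oL] by blast
  then have 2: "le m' (m + z)" by simp
  show ?thesis using ovs_antisym[OF oL 1 2] unfolding m_def m'_def by simp
qed

lemma mupp_transl:
  assumes M: "mixed_lattice_vs le sle"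
  shows "mupp le sle (x + z) (y + z) = mupp le sle x y + z"
proof -
  have oL: "ordered_vs_rel le" and oS: "ordered_vs_rel sle"
    using M unfolding mixed_lattice_vs_def by blast+
  define m where "m = mupp le sle x y"
  define m' where "m' = mupp le sle (x + z) (y + z)"
  have P: "sle x m" "le y m" "\<And>w. sle x w \<Longrightarrow> le y w \<Longrightarrow> le m w"
    using mupp_props[OF M, of x y] unfolding m_def by blast+
  have P': "sle (x+z) m'" "le (y+z) m'" "\<And>w. sle (x+z) w \<Longrightarrow> le (y+z) w \<Longrightarrow> le m' w"
    using mupp_props[OF M, of "x+z" "y+z"] unfolding m'_def by blast+
  have 1: "le m' (m + z)"
    using P'(3) ovs_add[OF oS P(1)] ovs_add[OF oL P(2)] by blast
  have "sle x (m' + - z)" using ovs_add[OF oS P'(1), of "-z"] by simp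
  moreover have "le y (m' + - z)" using ovs_add[OF oL P'(2), of "-z"] by simp
  ultimately have "le m (m' + - z)" using P(3) by blast
  then have "le (m + z) (m' + - z + z)" using ovs_add[OF oL] by blast
  then have 2: "le (m + z) m'" by simp
  show ?thesis using ovs_antisym[OF oL 1 2] unfolding m_def m'_def by simp
qed

lemma sp_pos:
  assumes M: "mixed_lattice_vs le sle" and Q: "quasi_regular le sle" and c: "sle 0 c"
  shows "le 0 c"
proof -
  have oL: "ordered_vs_rel le" and oS: "ordered_vs_rel sle"
    using M unfolding mixed_lattice_vs_def by blast+
  define m where "m = mlow le sle 0 c"
  have "sle m 0" "le m c" using mlow_props[OF M, of 0 c] unfolding m_def by blast+
  moreover have "sle 0 m" using Q c ovs_refl[OF oS] unfolding quasi_regular_def m_def by blast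
  ultimately have "m = 0" using ovs_antisym[OF oS] by blast
  then show ?thesis using \<open>le m c\<close> by simp
qed

theorem theorem4p15:
  fixes le sle :: "'a::real_vector \<Rightarrow> 'a \<Rightarrow> bool" and W :: "'a set"
  assumes "mixed_lattice_vs le sle"
    and "quasi_regular le sle"
  shows "(regular_subspace sle W \<and> quasi_ideal le sle W) \<longleftrightarrow>
         (\<exists>A. mixed_ideal le sle A \<and> W = diff_set (pos_part sle A))"
proof -
  note M = assms(1) and Q = assms(2)
  have oL: "ordered_vs_rel le" and oS: "ordered_vs_rel sle"
    using M unfolding mixed_lattice_vs_def by blast+
  show ?thesis
  proof
    assume H: "regular_subspace sle W \<and> quasi_ideal le sle W"
    have subW: "subspace W" and WW: "W = diff_set (pos_part sle W)"
      using H unfolding regular_subspace_def by blast+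
    have Wq: "\<And>x y. y \<in> W \<Longrightarrow> sle 0 x \<Longrightarrow> le x y \<Longrightarrow> x \<in> W"
      using H unfolding quasi_ideal_def by blast
    have Wc: "\<And>u v. u \<in> W \<Longrightarrow> sle 0 u \<Longrightarrow> v \<in> W \<Longrightarrow> sle 0 v \<Longrightarrow>
        u + v \<in> W \<and> sle 0 (u + v)"
      using subspace_add[OF subW] cone_add[OF oS] by blast
    define A where "A = {x. \<exists>u\<in>W. sle 0 u \<and> le 0 (u + x) \<and> le 0 (u - x)}"
    have Ae: "x \<in> A \<longleftrightarrow> (\<exists>u\<in>W. sle 0 u \<and> le 0 (u + x) \<and> le 0 (u - x))" for x
      unfolding A_def by simp
    have subA: "subspace A"
      unfolding subspace_def
    proof (intro conjI ballI allI)
      show "0 \<in> A" unfolding Ae using subspace_0[OF subW] ovs_refl[OF oS] ovs_refl[OF oL]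
        by (intro bexI[of _ 0]) auto
    next
      fix x y assume "x \<in> A" "y \<in> A"
      then obtain u v where u: "u \<in> W" "sle 0 u" "le 0 (u + x)" "le 0 (u - x)"
        and v: "v \<in> W" "sle 0 v" "le 0 (v + y)" "le 0 (v - y)" unfolding Ae by blast
      have "le 0 ((u + x) + (v + y))" "le 0 ((u - x) + (v - y))"
        using cone_add[OF oL u(3) v(3)] cone_add[OF oL u(4) v(4)] by auto
      then have "le 0 ((u + v) + (x + y))" "le 0 ((u + v) - (x + y))"
        by (simp_all add: algebra_simps)
      then show "x + y \<in> A" unfolding Ae using Wc[OF u(1,2) v(1,2)] by blast
    next
      fix c :: real and x assume "x \<in> A"
      then obtain u where u: "u \<in> W" "sle 0 u" "le 0 (u + x)" "le 0 (u - x)"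
        unfolding Ae by blast
      have uW: "\<bar>c\<bar> *\<^sub>R u \<in> W" "sle 0 (\<bar>c\<bar> *\<^sub>R u)"
        using subspace_scale[OF subW u(1)] cone_scale[OF oS u(2)] by auto
      have "le 0 (\<bar>c\<bar> *\<^sub>R u + c *\<^sub>R x) \<and> le 0 (\<bar>c\<bar> *\<^sub>R u - c *\<^sub>R x)"
      proof (cases "c \<ge> 0")
        case True
        then show ?thesis using cone_scale[OF oL u(3) True] cone_scale[OF oL u(4) True]
          by (simp add: algebra_simps)
      next
        case False
        then have c: "0 \<le> - c" by simp
        show ?thesis using cone_scale[OF oL u(3) c] cone_scale[OF oL u(4) c] False
          by (simp add: algebra_simps)
      qed
      then show "c *\<^sub>R x \<in> A" unfolding Ae using uW by blast
    qed
    have Aconv: "z \<in> A" if hh: "x \<in> A" "y \<in> A" "le x z" "le z y" for x y z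
    proof -
      obtain u v where u: "u \<in> W" "sle 0 u" "le 0 (u + x)" "le 0 (u - x)"
        and v: "v \<in> W" "sle 0 v" "le 0 (v + y)" "le 0 (v - y)" using hh(1,2) unfolding Ae by blast
      have u0: "le 0 u" "le 0 v" using sp_pos[OF M Q] u(2) v(2) by blast+
      have zx: "le 0 (z - x)" "le 0 (y - z)" using hh(3,4) ovs_iff[OF oL, of x z] ovs_iff[OF oL, of z y] by auto
      have "le 0 ((z - x) + (u + x) + v)" "le 0 ((y - z) + (v - y) + u)"
        using cone_add[OF oL cone_add[OF oL zx(1) u(3)] u0(2)]
          cone_add[OF oL cone_add[OF oL zx(2) v(4)] u0(1)] by auto
      then have "le 0 ((u + v) + z)" "le 0 ((u + v) - z)" by (simp_all add: algebra_simps)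
      then show ?thesis unfolding Ae using Wc[OF u(1,2) v(1,2)] by blast
    qed
    have Acl: "mlow le sle x y \<in> A \<and> mupp le sle x y \<in> A" if hh: "x \<in> A" "y \<in> A" for x y
    proof -
      obtain u v where u: "u \<in> W" "sle 0 u" "le 0 (u + x)" "le 0 (u - x)"
        and v: "v \<in> W" "sle 0 v" "le 0 (v + y)" "le 0 (v - y)" using hh(1,2) unfolding Ae by blast
      have u0: "le 0 u" "le 0 v" using sp_pos[OF M Q] u(2) v(2) by blast+
      have uv: "sle 0 (u + v)" using cone_add[OF oS u(2) v(2)] .
      have uv2: "sle 0 (v + u)" using cone_add[OF oS v(2) u(2)] .
      obtain b where b: "b \<in> W" "sle 0 b" "b = u + u + v"
        using Wc[OF Wc[OF u(1,2) u(1,2), THEN conjunct1] Wc[OF u(1,2) u(1,2), THEN conjunct2] v(1,2)]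
        by blast
      define m where "m = mlow le sle x y"
      have m: "sle m x" "le m y" "\<And>w. sle w x \<Longrightarrow> le w y \<Longrightarrow> le w m"
        using mlow_props[OF M, of x y] unfolding m_def by blast+
      have "x - (x - (u + v)) = u + v" by simp
      then have "sle (x - (u + v)) x" using ovs_iff[OF oS, of "x - (u + v)" x] uv uv2 by simp
      moreover have "le 0 ((u - x) + (v + y))" using cone_add[OF oL u(4) v(3)] .
      then have "le (x - (u + v)) y" by (subst ovs_iff[OF oL]) (simp add: algebra_simps)
      ultimately have "le (x - (u + v)) m" using m(3) by blast
      then have m1: "le 0 (m - x + u + v)" by (subst (asm) ovs_iff[OF oL]) (simp add: algebra_simps)
      have m2: "le 0 (y - m)" using m(2) ovs_iff[OF oL] by blast
      have "le 0 ((m - x + u + v) + (u + x))" "le 0 ((y - m) + (v - y) + u + u)"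
        using cone_add[OF oL m1 u(3)]
          cone_add[OF oL cone_add[OF oL cone_add[OF oL m2 v(4)] u0(1)] u0(1)] by auto
      then have "le 0 (b + m)" "le 0 (b - m)" using b(3) by (simp_all add: algebra_simps)
      then have mA: "m \<in> A" unfolding Ae using b by blast
      define p where "p = mupp le sle x y"
      have p: "sle x p" "le y p" "\<And>w. sle x w \<Longrightarrow> le y w \<Longrightarrow> le p w"
        using mupp_props[OF M, of x y] unfolding p_def by blast+
      have "x + (u + v) - x = u + v" by simp
      then have "sle x (x + (u + v))" using ovs_iff[OF oS, of x "x + (u + v)"] uv uv2 by simp
      moreover have "le 0 ((u + x) + (v - y))" using cone_add[OF oL u(3) v(4)] .
      then have "le y (x + (u + v))" by (subst ovs_iff[OF oL]) (simp add: algebra_simps)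
      ultimately have "le p (x + (u + v))" using p(3) by blast
      then have p1: "le 0 (x + u + v - p)" by (subst (asm) ovs_iff[OF oL]) (simp add: algebra_simps)
      have p2: "le 0 (p - y)" using p(2) ovs_iff[OF oL] by blast
      have "le 0 ((p - y) + (v + y) + u + u)" "le 0 ((x + u + v - p) + (u - x))"
        using cone_add[OF oL cone_add[OF oL cone_add[OF oL p2 v(3)] u0(1)] u0(1)]
          cone_add[OF oL p1 u(4)] by auto
      then have "le 0 (b + p)" "le 0 (b - p)" using b(3) by (simp_all add: algebra_simps)
      then have pA: "p \<in> A" unfolding Ae using b by blast
      show ?thesis using mA pA unfolding m_def p_def by blast
    qed
    have idA: "mixed_ideal le sle A"
      unfolding mixed_ideal_def mixed_lattice_subspace_def
      using subA Acl Aconv by blast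
    have "pos_part sle A = pos_part sle W"
    proof
      show "pos_part sle A \<subseteq> pos_part sle W"
      proof
        fix x assume "x \<in> pos_part sle A"
        then have x: "x \<in> A" "sle 0 x" unfolding pos_part_def by auto
        then obtain u where u: "u \<in> W" "le 0 (u - x)" unfolding Ae by blast
        then have "le x u" using ovs_iff[OF oL] by blast
        then have "x \<in> W" using Wq u(1) x(2) by blast
        then show "x \<in> pos_part sle W" using x unfolding pos_part_def by auto
      qed
    next
      show "pos_part sle W \<subseteq> pos_part sle A"
      proof
        fix x assume "x \<in> pos_part sle W"
        then have x: "x \<in> W" "sle 0 x" unfolding pos_part_def by auto
        have "le 0 x" using sp_pos[OF M Q x(2)] .
        then have "le 0 (x + x)" "le 0 (x - x)" using cone_add[OF oL] ovs_refl[OF oL] by auto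
        then have "x \<in> A" unfolding Ae using x by blast
        then show "x \<in> pos_part sle A" using x unfolding pos_part_def by auto
      qed
    qed
    then show "\<exists>A. mixed_ideal le sle A \<and> W = diff_set (pos_part sle A)"
      using idA WW by metis
  next
    assume "\<exists>A. mixed_ideal le sle A \<and> W = diff_set (pos_part sle A)"
    then obtain A where idA: "mixed_ideal le sle A" and WA: "W = diff_set (pos_part sle A)"
      by blast
    define P where "P = pos_part sle A"
    have subA: "subspace A" and Acl: "\<And>x y. x \<in> A \<Longrightarrow> y \<in> A \<Longrightarrow>
        mlow le sle x y \<in> A \<and> mupp le sle x y \<in> A"
      and Aconv: "\<And>x y z. x \<in> A \<Longrightarrow> y \<in> A \<Longrightarrow> le x z \<Longrightarrow> le z y \<Longrightarrow> z \<in> A"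
      using idA unfolding mixed_ideal_def mixed_lattice_subspace_def by blast+
    have Pe: "x \<in> P \<longleftrightarrow> x \<in> A \<and> sle 0 x" for x unfolding P_def pos_part_def by simp
    have We: "z \<in> W \<longleftrightarrow> (\<exists>a b. z = a - b \<and> a \<in> P \<and> b \<in> P)" for z
      unfolding WA P_def diff_set_def by blast
    have P0: "0 \<in> P" using subspace_0[OF subA] ovs_refl[OF oS] Pe by blast
    have Padd: "a + b \<in> P" if "a \<in> P" "b \<in> P" for a b
      using that subspace_add[OF subA] cone_add[OF oS] Pe by blast
    have Psc: "c *\<^sub>R a \<in> P" if "a \<in> P" "0 \<le> c" for a c
      using that subspace_scale[OF subA] cone_scale[OF oS] Pe by blast
    have subW: "subspace W"
      unfolding subspace_def
    proof (intro conjI ballI allI)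
      show "0 \<in> W" unfolding We using P0 by (intro exI[of _ 0]) auto
    next
      fix x y assume "x \<in> W" "y \<in> W"
      then obtain a b c d where "x = a - b" "y = c - d" "a \<in> P" "b \<in> P" "c \<in> P" "d \<in> P"
        unfolding We by blast
      then show "x + y \<in> W" unfolding We using Padd
        by (intro exI[of _ "a + c"] exI[of _ "b + d"]) (auto simp: algebra_simps)
    next
      fix c :: real and x assume "x \<in> W"
      then obtain a b where ab: "x = a - b" "a \<in> P" "b \<in> P" unfolding We by blast
      show "c *\<^sub>R x \<in> W"
      proof (cases "c \<ge> 0")
        case True
        then show ?thesis unfolding We using ab Psc
          by (intro exI[of _ "c *\<^sub>R a"] exI[of _ "c *\<^sub>R b"]) (auto simp: algebra_simps)
      next
        case False
        then have c: "0 \<le> - c" by simp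
        then show ?thesis unfolding We using ab Psc[OF _ c]
          by (intro exI[of _ "(- c) *\<^sub>R b"] exI[of _ "(- c) *\<^sub>R a"]) (auto simp: algebra_simps)
      qed
    qed
    have WsubA: "W \<subseteq> A"
    proof
      fix z assume "z \<in> W"
      then obtain a b where "z = a - b" "a \<in> P" "b \<in> P" unfolding We by blast
      then show "z \<in> A" using Pe subspace_diff[OF subA, of a b] by simp
    qed
    have PW: "pos_part sle W = P"
    proof
      show "pos_part sle W \<subseteq> P" using WsubA Pe unfolding pos_part_def by blast
      show "P \<subseteq> pos_part sle W"
      proof
        fix x assume x: "x \<in> P"
        then have "x \<in> W" unfolding We using P0 by (intro exI[of _ x] exI[of _ 0]) auto
        then show "x \<in> pos_part sle W" using x Pe unfolding pos_part_def by blast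
      qed
    qed
    have WP: "W = diff_set P" unfolding P_def by (rule WA)
    have reg: "regular_subspace sle W"
      unfolding regular_subspace_def
    proof
      show "subspace W" by (rule subW)
      show "W = diff_set (pos_part sle W)" by (subst PW) (rule WP)
    qed
    have Wcl: "mlow le sle x y \<in> W \<and> mupp le sle x y \<in> W" if hh: "x \<in> W" "y \<in> W" for x y
    proof -
      obtain a b c d where abcd: "x = a - b" "y = c - d" "a \<in> P" "b \<in> P" "c \<in> P" "d \<in> P"
        using hh unfolding We by blast
      have ad: "a + d \<in> P" "c + b \<in> P" "b + d \<in> P" using Padd abcd by blast+
      have t1: "x + (b + d) = a + d" "y + (b + d) = c + b" using abcd(1,2) by (simp_all add: algebra_simps)
      have e1: "mlow le sle (a + d) (c + b) = mlow le sle x y + (b + d)"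
        using mlow_transl[OF M, of x "b + d" y] unfolding t1 .
      have e2: "mupp le sle (a + d) (c + b) = mupp le sle x y + (b + d)"
        using mupp_transl[OF M, of x "b + d" y] unfolding t1 .
      have "mlow le sle (a + d) (c + b) \<in> P" "mupp le sle (a + d) (c + b) \<in> P"
        using Acl[of "a + d" "c + b"] ad Pe Q unfolding quasi_regular_def by blast+
      then have "mlow le sle x y = mlow le sle (a + d) (c + b) - (b + d)"
        "mupp le sle x y = mupp le sle (a + d) (c + b) - (b + d)"
        "mlow le sle (a + d) (c + b) \<in> P" "mupp le sle (a + d) (c + b) \<in> P"
        using e1 e2 by (simp_all add: algebra_simps)
      then show ?thesis unfolding We using ad(3) by blast
    qed
    have Wq: "x \<in> W" if "y \<in> W" "sle 0 x" "le x y" for x y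
    proof -
      have "le 0 x" using sp_pos[OF M Q that(2)] .
      then have "x \<in> A" using Aconv[OF subspace_0[OF subA], of y x] that WsubA by blast
      then have "x \<in> P" using Pe that(2) by blast
      then show ?thesis unfolding We using P0 by (intro exI[of _ x] exI[of _ 0]) auto
    qed
    show "regular_subspace sle W \<and> quasi_ideal le sle W"
      using reg subW Wcl Wq unfolding quasi_ideal_def mixed_lattice_subspace_def by blast
  qed
qed

end
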